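(* Let $X$ be a geodesic $\delta$--hyperbolic space ($\delta\geqslant 0$), let $g$ be an isometry of $X$ and let $x,y\in X$. If $m_1$ is the midpoint of a geodesic segment $[x,gx]$ and $m_2$ is the midpoint of a geodesic segment $[y,gy]$, then every geodesic segment $[m_1,m_2]$ is contained in $C_g^{+70\delta}$.
   Context: Distances are written $|x-y|$; Gromov product $(p,q)_x:=\frac12(|p-x|+|q-x|-|p-q|)$; $X$ is $\delta$--hyperbolic if $(p,r)_x\geqslant \min\{(p,q)_x,(q,r)_x\}-\delta$ for all $p,q,r,x$. For an isometry $g$, its translation length is $[g]:=\inf_{x\in X}|gx-x|$ and $C_g:=\{x\in X\mid |gx-x|\leqslant [g]+8\delta\}$. For $A\subset X$ and $a\geqslant 0$, $A^{+a}:=\{x\in X\mid d(x,A)\leqslant a\}$. *)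

theory Defs
  imports "HOL-Analysis.Analysis"
begin

text \<open>The space X is the whole carrier of a metric space type 'a.\<close>

definition gromov_product :: "'a::metric_space \<Rightarrow> 'a \<Rightarrow> 'a \<Rightarrow> real" where
  "gromov_product p q x = (dist p x + dist q x - dist p q) / 2"

definition delta_hyperbolic :: "real \<Rightarrow> 'a::metric_space itself \<Rightarrow> bool" where
  "delta_hyperbolic \<delta> _ \<longleftrightarrow> (\<forall>p q r x::'a.
     gromov_product p r x \<ge> min (gromov_product p q x) (gromov_product q r x) - \<delta>)"

definition geodesic_path :: "(real \<Rightarrow> 'a::metric_space) \<Rightarrow> 'a \<Rightarrow> 'a \<Rightarrow> bool" where
  "geodesic_path \<gamma> x y \<longleftrightarrow> \<gamma> 0 = x \<and> \<gamma> (dist x y) = y \<and>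
     (\<forall>s\<in>{0..dist x y}. \<forall>t\<in>{0..dist x y}. dist (\<gamma> s) (\<gamma> t) = \<bar>s - t\<bar>)"

definition geodesic_space :: "'a::metric_space itself \<Rightarrow> bool" where
  "geodesic_space _ \<longleftrightarrow> (\<forall>x y::'a. \<exists>\<gamma>. geodesic_path \<gamma> x y)"

definition isometry :: "('a::metric_space \<Rightarrow> 'a) \<Rightarrow> bool" where
  "isometry g \<longleftrightarrow> bij g \<and> (\<forall>x y. dist (g x) (g y) = dist x y)"

definition translation_length :: "('a::metric_space \<Rightarrow> 'a) \<Rightarrow> real" where
  "translation_length g = Inf {dist (g x) x | x. True}"

definition min_set :: "real \<Rightarrow> ('a::metric_space \<Rightarrow> 'a) \<Rightarrow> 'a set" where
  "min_set \<delta> g = {x. dist (g x) x \<le> translation_length g + 8 * \<delta>}"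

text \<open>A^{+a}; d(x, empty) = infinity, so the neighbourhood of the empty set is empty.\<close>
definition nbhd :: "'a::metric_space set \<Rightarrow> real \<Rightarrow> 'a set" where
  "nbhd A a = {x. A \<noteq> {} \<and> infdist x A \<le> a}"

end

theory Submission
  imports Defs
begin

lemma hyp4:
  assumes "delta_hyperbolic \<delta> TYPE('a::metric_space)"
  shows "gromov_product (p::'a) r x \<ge> min (gromov_product p q x) (gromov_product q r x) - \<delta>"
  using assms unfolding delta_hyperbolic_def by blast

lemma tl_facts:
  assumes "isometry (g::'a::metric_space \<Rightarrow> 'a)"
  shows "translation_length g \<le> dist (g p) p" "translation_length g \<ge> 0"
proof -
  have bdd: "bdd_below {dist (g x) x | x. True}"
    by (rule bdd_belowI[of _ 0]) auto
  show "translation_length g \<le> dist (g p) p"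
    unfolding translation_length_def by (rule cInf_lower) (use bdd in auto)
  show "translation_length g \<ge> 0"
    unfolding translation_length_def by (rule cInf_greatest) auto
qed

lemma s_bound:
  assumes iso: "isometry (g::'a::metric_space \<Rightarrow> 'a)" and hyp: "delta_hyperbolic \<delta> TYPE('a)"
  shows "gromov_product p (g (g p)) (g p) \<ge> (dist (g p) p - translation_length g) / 2 - \<delta>"
proof -
  have dg: "\<And>u v. dist (g u) (g v) = dist u v" using iso unfolding isometry_def by blast
  let ?s = "gromov_product p (g (g p)) (g p)"
  have "\<forall>z\<in>{dist (g x) x | x. True}. dist (g p) p - 2 * ?s - 2 * \<delta> \<le> z"
  proof
    fix z assume "z \<in> {dist (g x) x | x. True}"
    then obtain w where zw: "z = dist (g w) w" by blast
    have h: "?s \<ge> min (gromov_product p (g w) (g p)) (gromov_product (g w) (g (g p)) (g p)) - \<delta>"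
      using hyp4[OF hyp] by blast
    have t1: "dist p (g w) \<le> dist p w + dist w (g w)" by (rule dist_triangle)
    have t2: "dist w (g p) \<le> dist w (g w) + dist (g w) (g p)" by (rule dist_triangle)
    have e1: "dist (g w) (g p) = dist w p" by (rule dg)
    have e2: "dist (g (g p)) (g p) = dist (g p) p" by (rule dg)
    have e3: "dist (g w) (g (g p)) = dist w (g p)" by (rule dg)
    have A: "gromov_product p (g w) (g p) = (dist p (g p) + dist w p - dist p (g w)) / 2"
      unfolding gromov_product_def using e1 by simp
    have B: "gromov_product (g w) (g (g p)) (g p) = (dist w p + dist (g p) p - dist w (g p)) / 2"
      unfolding gromov_product_def using e1 e2 e3 by simp
    have S: "?s = (dist p (g p) + dist (g p) p - dist p (g (g p))) / 2"
      unfolding gromov_product_def using e2 by (simp add: dist_commute)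
    have c1: "dist p (g p) = dist (g p) p" "dist w p = dist p w" "dist w (g w) = dist (g w) w"
      by (simp_all add: dist_commute)
    have "?s \<ge> gromov_product p (g w) (g p) - \<delta> \<or> ?s \<ge> gromov_product (g w) (g (g p)) (g p) - \<delta>"
      using h by (auto simp: min_def split: if_splits)
    then show "dist (g p) p - 2 * ?s - 2 * \<delta> \<le> z"
      using A B S c1 t1 t2 zw e1 by argo
  qed
  hence "dist (g p) p - 2 * ?s - 2 * \<delta> \<le> translation_length g"
    unfolding translation_length_def by (intro cInf_greatest) blast+
  thus ?thesis by argo
qed

lemma geod_dists:
  assumes "geodesic_path \<gamma> a b" "r \<in> {0..dist a b}"
  shows "dist (\<gamma> r) a = r" "dist (\<gamma> r) b = dist a b - r"
proof -
  have a: "\<gamma> 0 = a" and b: "\<gamma> (dist a b) = b"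
    and iso: "\<forall>s\<in>{0..dist a b}. \<forall>t\<in>{0..dist a b}. dist (\<gamma> s) (\<gamma> t) = \<bar>s - t\<bar>"
    using assms(1) unfolding geodesic_path_def by auto
  have "dist (\<gamma> r) (\<gamma> 0) = \<bar>r - 0\<bar>" using iso assms(2) by auto
  thus "dist (\<gamma> r) a = r" using a assms(2) by auto
  have "dist (\<gamma> r) (\<gamma> (dist a b)) = \<bar>r - dist a b\<bar>" using iso assms(2) by auto
  thus "dist (\<gamma> r) b = dist a b - r" using b assms(2) by auto
qed

lemma disp_on_geod:
  assumes iso: "isometry (g::'a::metric_space \<Rightarrow> 'a)" and hyp: "delta_hyperbolic \<delta> TYPE('a)"
    and d0: "\<delta> \<ge> 0" and gp: "geodesic_path \<gamma> p (g p)" and r: "r \<in> {0..dist p (g p)}"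
  shows "dist (g (\<gamma> r)) (\<gamma> r) \<le> dist p (g p) - 2 * min (min (dist p (g p) - r) r) (gromov_product p (g (g p)) (g p)) + 4 * \<delta>"
proof -
  have dg: "\<And>u v. dist (g u) (g v) = dist u v" using iso unfolding isometry_def by blast
  define q where "q = \<gamma> r"
  define D where "D = dist p (g p)"
  define s where "s = gromov_product p (g (g p)) (g p)"
  have qp: "dist q p = r" and qgp: "dist q (g p) = D - r"
    using geod_dists[OF gp r] unfolding q_def D_def by auto
  have h1: "gromov_product q (g q) (g p) \<ge> min (gromov_product q (g (g p)) (g p)) (gromov_product (g (g p)) (g q) (g p)) - \<delta>"
    using hyp4[OF hyp] by blast
  have h2: "gromov_product q (g (g p)) (g p) \<ge> min (gromov_product q p (g p)) (gromov_product p (g (g p)) (g p)) - \<delta>"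
    using hyp4[OF hyp] by blast
  have g1: "gromov_product q p (g p) = D - r"
    unfolding gromov_product_def using qp qgp D_def by (simp add: dist_commute)
  have e1: "dist (g (g p)) (g q) = D - r" using dg qgp by (simp add: dist_commute)
  have e2: "dist (g q) (g p) = r" using dg qp by simp
  have e3: "dist (g (g p)) (g p) = D" using dg D_def by (simp add: dist_commute)
  have g2: "gromov_product (g (g p)) (g q) (g p) = r"
    unfolding gromov_product_def using e1 e2 e3 by simp
  have c2: "dist (g p) (g q) = dist (g q) (g p)" "dist (g q) q = dist q (g q)"
    by (simp_all add: dist_commute)
  have g3: "dist (g q) q = (D - r) + r - 2 * gromov_product q (g q) (g p)"
  proof -
    have "gromov_product q (g q) (g p) = (dist q (g p) + dist (g q) (g p) - dist q (g q)) / 2"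
      unfolding gromov_product_def by simp
    thus ?thesis using qgp e2 c2 by argo
  qed
  have "dist (g q) q \<le> D - 2 * min (min (D - r) r) s + 4 * \<delta>"
    using h1 h2 g1 g2 g3 s_def d0 unfolding min_def by (smt (verit))
  thus ?thesis unfolding q_def D_def s_def .
qed

lemma near_min_set:
  assumes gs: "geodesic_space TYPE('a::metric_space)" and d0: "\<delta> \<ge> 0"
    and iso: "isometry (g::'a \<Rightarrow> 'a)" and hyp: "delta_hyperbolic \<delta> TYPE('a)"
  shows "\<exists>q. dist (g q) q \<le> translation_length g + 8 * \<delta> \<and>
     dist p q \<le> max 0 ((dist (g p) p - translation_length g) / 2)"
proof -
  define L where "L = translation_length g"
  define D where "D = dist (g p) p"
  have L0: "L \<ge> 0" using tl_facts[OF iso] L_def by auto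
  show ?thesis
  proof (cases "D \<le> L + 2 * \<delta>")
    case True
    then show ?thesis using d0 unfolding D_def L_def by (intro exI[of _ p]) auto
  next
    case False
    obtain \<gamma> where gp: "geodesic_path \<gamma> p (g p)" using gs unfolding geodesic_space_def by blast
    define r where "r = (D - L) / 2 - \<delta>"
    have Dd: "dist p (g p) = D" unfolding D_def by (simp add: dist_commute)
    have r0: "r \<ge> 0" "r \<le> D / 2" using False L0 d0 unfolding r_def by argo+
    have rin: "r \<in> {0..dist p (g p)}" using r0 Dd by auto
    have sb: "gromov_product p (g (g p)) (g p) \<ge> r"
      using s_bound[OF iso hyp, of p] unfolding r_def D_def L_def by argo
    have mn: "min (min (D - r) r) (gromov_product p (g (g p)) (g p)) = r"
      using sb r0 by auto
    have "dist (g (\<gamma> r)) (\<gamma> r) \<le> D - 2 * r + 4 * \<delta>"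
      using disp_on_geod[OF iso hyp d0 gp rin] mn Dd by simp
    moreover have "D - 2 * r + 4 * \<delta> = L + 6 * \<delta>" unfolding r_def by (simp add: field_simps)
    ultimately have c1: "dist (g (\<gamma> r)) (\<gamma> r) \<le> L + 8 * \<delta>" using d0 by linarith
    have "dist (\<gamma> r) p = r" using geod_dists[OF gp rin] by simp
    hence "dist p (\<gamma> r) \<le> max 0 ((D - L) / 2)" using d0 unfolding r_def by (simp add: dist_commute)
    then show ?thesis using c1 unfolding D_def L_def by blast
  qed
qed

lemma midpoint_disp:
  assumes d0: "\<delta> \<ge> 0"
    and iso: "isometry (g::'a::metric_space \<Rightarrow> 'a)" and hyp: "delta_hyperbolic \<delta> TYPE('a)"
    and gp: "geodesic_path \<gamma> x (g x)"
  shows "dist (g (\<gamma> (dist x (g x) / 2))) (\<gamma> (dist x (g x) / 2)) \<le> translation_length g + 6 * \<delta>"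
proof -
  define D where "D = dist x (g x)"
  define L where "L = translation_length g"
  define s where "s = gromov_product x (g (g x)) (g x)"
  have L0: "L \<ge> 0" using tl_facts[OF iso] L_def by auto
  have D0: "D \<ge> 0" unfolding D_def by simp
  have rin: "D / 2 \<in> {0..dist x (g x)}" using D0 D_def by auto
  have sb: "s \<ge> (D - L) / 2 - \<delta>"
  proof -
    have "dist (g x) x = D" by (simp add: D_def dist_commute)
    thus ?thesis using s_bound[OF iso hyp, of x] unfolding s_def L_def by argo
  qed
  have "min (min (D - D/2) (D/2)) s \<ge> (D - L) / 2 - \<delta>"
  proof -
    have "(D - L) / 2 - \<delta> \<le> D / 2" "(D - L) / 2 - \<delta> \<le> D - D / 2" using L0 d0 by (simp_all add: field_simps)
    thus ?thesis using sb by simp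
  qed
  moreover have "dist (g (\<gamma> (D/2))) (\<gamma> (D/2)) \<le> D - 2 * min (min (D - D/2) (D/2)) s + 4 * \<delta>"
    using disp_on_geod[OF iso hyp d0 gp rin] unfolding D_def s_def by simp
  ultimately show ?thesis unfolding D_def L_def by argo
qed

lemma geod_point_bound:
  assumes hyp: "delta_hyperbolic \<delta> TYPE('a::metric_space)"
    and gp: "geodesic_path \<gamma> a b" and t: "t \<in> {0..dist a b}"
  shows "dist (\<gamma> t) (w::'a) \<le> max (dist a w - t) (dist b w - (dist a b - t)) + 2 * \<delta>"
proof -
  have pa: "dist (\<gamma> t) a = t" and pb: "dist (\<gamma> t) b = dist a b - t"
    using geod_dists[OF gp t] by auto
  have h: "gromov_product a b (\<gamma> t) \<ge> min (gromov_product a w (\<gamma> t)) (gromov_product w b (\<gamma> t)) - \<delta>"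
    using hyp4[OF hyp] by blast
  have "gromov_product a b (\<gamma> t) = 0"
    unfolding gromov_product_def using pa pb by (simp add: dist_commute)
  then show ?thesis using h pa pb unfolding gromov_product_def min_def
    by (auto simp: dist_commute split: if_splits)
qed

lemma geod_image:
  assumes iso: "isometry (g::'a::metric_space \<Rightarrow> 'a)" and gp: "geodesic_path \<gamma> a b"
  shows "geodesic_path (g \<circ> \<gamma>) (g a) (g b)"
proof -
  have dg: "\<And>u v. dist (g u) (g v) = dist u v" using iso unfolding isometry_def by blast
  show ?thesis using gp unfolding geodesic_path_def by (simp add: dg)
qed

lemma disp_convex:
  assumes iso: "isometry (g::'a::metric_space \<Rightarrow> 'a)" and hyp: "delta_hyperbolic \<delta> TYPE('a)"
    and gp: "geodesic_path \<sigma> a b" and t: "t \<in> {0..dist a b}"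
    and ea: "dist a (g a) \<le> E" and eb: "dist b (g b) \<le> E"
  shows "dist (\<sigma> t) (g (\<sigma> t)) \<le> E + 4 * \<delta>"
proof -
  have dg: "\<And>u v. dist (g u) (g v) = dist u v" using iso unfolding isometry_def by blast
  have gg: "geodesic_path (g \<circ> \<sigma>) (g a) (g b)" by (rule geod_image[OF iso gp])
  have t': "t \<in> {0..dist (g a) (g b)}" using t dg by simp
  define T where "T = dist a b"
  have b1: "dist (g (\<sigma> t)) a \<le> max (dist (g a) a - t) (dist (g b) a - (T - t)) + 2 * \<delta>"
    using geod_point_bound[OF hyp gg t', of a] dg unfolding T_def by simp
  have b2: "dist (g (\<sigma> t)) b \<le> max (dist (g a) b - t) (dist (g b) b - (T - t)) + 2 * \<delta>"
    using geod_point_bound[OF hyp gg t', of b] dg unfolding T_def by simp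
  have b3: "dist (\<sigma> t) (g (\<sigma> t)) \<le> max (dist a (g (\<sigma> t)) - t) (dist b (g (\<sigma> t)) - (T - t)) + 2 * \<delta>"
    using geod_point_bound[OF hyp gp t, of "g (\<sigma> t)"] unfolding T_def by simp
  have tr1: "dist (g b) a \<le> dist (g b) b + dist b a" by (rule dist_triangle)
  have tr2: "dist (g a) b \<le> dist (g a) a + dist a b" by (rule dist_triangle)
  have t0: "0 \<le> t" "t \<le> T" using t T_def by auto
  show ?thesis using b1 b2 b3 tr1 tr2 t0 ea eb unfolding T_def max_def
    by (auto simp: dist_commute split: if_splits)
qed

theorem lemma2p15:
  fixes \<delta> :: real and g :: "'a::metric_space \<Rightarrow> 'a" and x y :: 'a
    and \<gamma>1 \<gamma>2 \<sigma> :: "real \<Rightarrow> 'a"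
  assumes "geodesic_space TYPE('a)"
    and "\<delta> \<ge> 0"
    and "delta_hyperbolic \<delta> TYPE('a)"
    and "isometry g"
    and "geodesic_path \<gamma>1 x (g x)"
    and "geodesic_path \<gamma>2 y (g y)"
    and "m1 = \<gamma>1 (dist x (g x) / 2)"
    and "m2 = \<gamma>2 (dist y (g y) / 2)"
    and "geodesic_path \<sigma> m1 m2"
  shows "\<sigma> ` {0..dist m1 m2} \<subseteq> nbhd (min_set \<delta> g) (70 * \<delta>)"
proof
  fix z assume "z \<in> \<sigma> ` {0..dist m1 m2}"
  then obtain t where t: "t \<in> {0..dist m1 m2}" and z: "z = \<sigma> t" by blast
  define L where "L = translation_length g"
  have m1: "dist m1 (g m1) \<le> L + 6 * \<delta>"
    using midpoint_disp[OF assms(2,4,3,5)] assms(7) L_def by (simp add: dist_commute)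
  have m2: "dist m2 (g m2) \<le> L + 6 * \<delta>"
    using midpoint_disp[OF assms(2,4,3,6)] assms(8) L_def by (simp add: dist_commute)
  have dz: "dist z (g z) \<le> L + 10 * \<delta>"
    using disp_convex[OF assms(4,3,9) t m1 m2] z by simp
  obtain q where q1: "dist (g q) q \<le> L + 8 * \<delta>"
    and q2: "dist z q \<le> max 0 ((dist (g z) z - L) / 2)"
    using near_min_set[OF assms(1,2,4,3), of z] L_def by blast
  have qin: "q \<in> min_set \<delta> g" using q1 L_def unfolding min_set_def by simp
  have "dist (g z) z = dist z (g z)" by (simp add: dist_commute)
  hence "dist z q \<le> 70 * \<delta>" using q2 dz assms(2) by (auto simp: max_def split: if_splits)
  hence "infdist z (min_set \<delta> g) \<le> 70 * \<delta>"
    using infdist_le[OF qin, of z] by argo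
  then show "z \<in> nbhd (min_set \<delta> g) (70 * \<delta>)" using qin unfolding nbhd_def by blast
qed

end
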